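(* Consider a two-player quantum zero-sum game as described in the context, and run the Optimistic Matrix Mirror Prox (OMMP) method with a regularizer $h$ that is $\mu$-strongly convex with respect to a norm $\|\cdot\|$ on the joint space, and with constant step size $\eta=\mu/(2\gamma)$, where $\gamma$ is a Lipschitz constant of the game operator $F$ with respect to $(\|\cdot\|,\|\cdot\|_* )$, i.e. $\|F(Z)-F(Z')\|_*\le\gamma\|Z-Z'\|$ for all joint states $Z,Z'$. Then the average iterate $\bar\Psi_N=\frac1N\sum_{t}\Psi_t$ of OMMP is an $\epsilon$-Nash equilibrium after $N=O_d(1/\epsilon)$ iterations, where the constant hidden in $O_d(\cdot)$ depends on the dimensions of the game (and on $h$) but not on $\epsilon$.
   Context: Game: Alice prepares an $n$-qubit mixed state $\alpha\in\mathcal{A}=\{\alpha\in\mathbb{C}^{2^n\times 2^n}:\alpha\succeq 0,\ \operatorname{Tr}\alpha=1\}$ and Bob an $m$-qubit mixed state $\beta\in\mathcal{B}=\{\beta\in\mathbb{C}^{2^m\times 2^m}:\beta\succeq0,\ \operatorname{Tr}\beta=1\}$ (no shared entanglement). A referee performs a POVM $\{P_\omega\}_{\omega\in\Omega}$ on $n+m$ qubits with finite outcome set $\Omega$, and $u:\Omega\to[-1,1]$ is Alice's utility. The payoff observable is $U=\sum_{\omega}u(\omega)P_\omega$ and Alice's expected payoff is $u(\alpha,\beta)=\operatorname{Tr}[U(\alpha\otimes\beta)]$; Alice maximizes it and Bob minimizes it. Joint states are pairs $\Psi=(\alpha,\beta)\in\mathcal{C}=\mathcal{A}\oplus\mathcal{B}$,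 with inner product $\langle(A_1,B_1),(A_2,B_2)\rangle=\operatorname{Tr}(A_1A_2)+\operatorname{Tr}(B_1B_2)$. The game operator is $F(\alpha,\beta)=(F_{\mathcal A}(\beta),F_{\mathcal B}(\alpha))$ with $F_{\mathcal A}(\beta)=\operatorname{Tr}_{\mathcal B}[U^\dagger(I\otimes\beta)]$ and $F_{\mathcal B}(\alpha)=-\operatorname{Tr}_{\mathcal A}[U^\dagger(\alpha\otimes I)]$ (partial traces). A joint state $(\alpha',\beta')$ is an $\epsilon$-Nash equilibrium if its duality gap $\max_{\alpha\in\mathcal A}u(\alpha,\beta')-\min_{\beta\in\mathcal B}u(\alpha',\beta)$ is at most $\epsilon$. Regularizer and Bregman divergence: $h$ is a differentiable strongly convex function on each player's spectraplex (applied blockwise on $\mathcal C$), and $D_h(X\|Y)=h(X)-h(Y)-\langle X-Y,\nabla h(Y)\rangle$. The proximal map is $P^{h,\eta}(X,Y)=\arg\max_{C}\{\langle Y,C-X\rangle-\frac1\eta D_h(C\|X)\}$, taken separately over $\mathcal A$ and over $\mathcal B$ for each player's block. OMMP: initialize $\Psi_0=\hat\Psi_0=(I/2^n,I/2^m)$; for $t=0,1,2,\dots$ set $\Psi_{t+1}=P^{h,\eta}(\hat\Psi_t,F(\Psi_t))$ and $\hat\Psi_{t+1}=P^{h,\eta}(\hat\Psi_t,F(\Psi_{t+1}))$ (each player updating its own block with its own component of $F$); after $N$ rounds output the average $\bar\Psi_N=\frac1N\sum_{t=0}^{N-1}\Psi_t$. *)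

theory Defs
  imports "HOL-Analysis.Analysis"
begin

text \<open>Complex square matrices indexed by a finite type; a register of n qubits is
  modelled by an index type 'a with CARD('a) = 2^n.\<close>

type_synonym 'n cmat = "complex ^'n ^'n"

definition adj :: "'n::finite cmat \<Rightarrow> 'n cmat" where
  "adj A = (\<chi> i j. cnj (A $ j $ i))"

definition hermitian :: "'n::finite cmat \<Rightarrow> bool" where
  "hermitian A \<longleftrightarrow> adj A = A"

definition psd :: "'n::finite cmat \<Rightarrow> bool" where
  "psd A \<longleftrightarrow> hermitian A \<and>
     (\<forall>v :: complex ^'n. 0 \<le> Re (\<Sum>i\<in>UNIV. \<Sum>j\<in>UNIV. cnj (v $ i) * A $ i $ j * v $ j))"

definition spectraplex :: "'n::finite cmat set" where
  "spectraplex = {A. psd A \<and> trace A = 1}"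

definition kron :: "'a::finite cmat \<Rightarrow> 'b::finite cmat \<Rightarrow> ('a \<times> 'b) cmat" where
  "kron A B = (\<chi> p q. A $ fst p $ fst q * B $ snd p $ snd q)"

definition ptrace_B :: "('a::finite \<times> 'b::finite) cmat \<Rightarrow> 'a cmat" where
  "ptrace_B X = (\<chi> i k. \<Sum>j\<in>UNIV. X $ (i, j) $ (k, j))"

definition ptrace_A :: "('a::finite \<times> 'b::finite) cmat \<Rightarrow> 'b cmat" where
  "ptrace_A X = (\<chi> j l. \<Sum>i\<in>UNIV. X $ (i, j) $ (i, l))"

definition is_povm :: "('w::finite \<Rightarrow> ('n::finite) cmat) \<Rightarrow> bool" where
  "is_povm P \<longleftrightarrow> (\<forall>w. psd (P w)) \<and> (\<Sum>w\<in>UNIV. P w) = mat 1"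

definition payoff_obs :: "('w::finite \<Rightarrow> ('n::finite) cmat) \<Rightarrow> ('w \<Rightarrow> real) \<Rightarrow> 'n cmat" where
  "payoff_obs P u = (\<Sum>w\<in>UNIV. u w *\<^sub>R P w)"

text \<open>Expected payoff Tr[U (alpha tensor beta)] (real for Hermitian U; Re is taken).\<close>
definition payoff :: "('a::finite \<times> 'b::finite) cmat \<Rightarrow> 'a cmat \<Rightarrow> 'b cmat \<Rightarrow> real" where
  "payoff U al be = Re (trace (U ** kron al be))"

definition joint_states :: "('a::finite cmat \<times> 'b::finite cmat) set" where
  "joint_states = spectraplex \<times> spectraplex"

definition herm_pairs :: "('a::finite cmat \<times> 'b::finite cmat) set" where
  "herm_pairs = {Z. hermitian (fst Z) \<and> hermitian (snd Z)}"

definition ip :: "('a::finite cmat \<times> 'b::finite cmat) \<Rightarrow> ('a cmat \<times> 'b cmat) \<Rightarrow> real" where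
  "ip X Y = Re (trace (fst X ** fst Y)) + Re (trace (snd X ** snd Y))"

definition game_op :: "('a::finite \<times> 'b::finite) cmat \<Rightarrow> ('a cmat \<times> 'b cmat) \<Rightarrow> ('a cmat \<times> 'b cmat)" where
  "game_op U Z = (ptrace_B (adj U ** kron (mat 1) (snd Z)),
                  - ptrace_A (adj U ** kron (fst Z) (mat 1)))"

definition is_norm_on :: "('v::real_vector \<Rightarrow> real) \<Rightarrow> 'v set \<Rightarrow> bool" where
  "is_norm_on nrm V \<longleftrightarrow>
     (\<forall>x\<in>V. 0 \<le> nrm x \<and> (nrm x = 0 \<longleftrightarrow> x = 0)) \<and>
     (\<forall>x\<in>V. \<forall>c::real. nrm (c *\<^sub>R x) = \<bar>c\<bar> * nrm x) \<and>
     (\<forall>x\<in>V. \<forall>y\<in>V. nrm (x + y) \<le> nrm x + nrm y)"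

definition dual_norm :: "(('a::finite cmat \<times> 'b::finite cmat) \<Rightarrow> real) \<Rightarrow> ('a cmat \<times> 'b cmat) \<Rightarrow> real" where
  "dual_norm nrm Y = (SUP X\<in>{X\<in>herm_pairs. nrm X \<le> 1}. ip Y X)"

definition reg :: "('a::finite cmat \<Rightarrow> real) \<Rightarrow> ('b::finite cmat \<Rightarrow> real) \<Rightarrow> ('a cmat \<times> 'b cmat) \<Rightarrow> real" where
  "reg hA hB Z = hA (fst Z) + hB (snd Z)"

definition reg_grad :: "('a::finite cmat \<Rightarrow> 'a cmat) \<Rightarrow> ('b::finite cmat \<Rightarrow> 'b cmat) \<Rightarrow> ('a cmat \<times> 'b cmat) \<Rightarrow> ('a cmat \<times> 'b cmat)" where
  "reg_grad gA gB Z = (gA (fst Z), gB (snd Z))"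

definition diff_with_grad :: "('n::finite cmat \<Rightarrow> real) \<Rightarrow> ('n cmat \<Rightarrow> 'n cmat) \<Rightarrow> bool" where
  "diff_with_grad h g \<longleftrightarrow> (\<forall>Y\<in>spectraplex. hermitian (g Y) \<and>
      (h has_derivative (\<lambda>H. Re (trace (H ** g Y)))) (at Y within spectraplex))"

definition strongly_convex_wrt ::
  "(('a::finite cmat \<times> 'b::finite cmat) \<Rightarrow> real) \<Rightarrow> (('a cmat \<times> 'b cmat) \<Rightarrow> ('a cmat \<times> 'b cmat))
    \<Rightarrow> (('a cmat \<times> 'b cmat) \<Rightarrow> real) \<Rightarrow> real \<Rightarrow> bool" where
  "strongly_convex_wrt h gh nrm \<mu> \<longleftrightarrow>
     (\<forall>X\<in>joint_states. \<forall>Y\<in>joint_states.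
        h X \<ge> h Y + ip (X - Y) (gh Y) + \<mu> / 2 * (nrm (X - Y))\<^sup>2)"

definition bregman :: "('n::finite cmat \<Rightarrow> real) \<Rightarrow> ('n cmat \<Rightarrow> 'n cmat) \<Rightarrow> 'n cmat \<Rightarrow> 'n cmat \<Rightarrow> real" where
  "bregman h g X Y = h X - h Y - Re (trace ((X - Y) ** g Y))"

definition prox1 :: "('n::finite cmat \<Rightarrow> real) \<Rightarrow> ('n cmat \<Rightarrow> 'n cmat) \<Rightarrow> real \<Rightarrow> 'n cmat \<Rightarrow> 'n cmat \<Rightarrow> 'n cmat" where
  "prox1 h g \<eta> X Y = arg_max (\<lambda>C. Re (trace (Y ** (C - X))) - (1 / \<eta>) * bregman h g C X) (\<lambda>C. C \<in> spectraplex)"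

definition prox :: "('a::finite cmat \<Rightarrow> real) \<Rightarrow> ('a cmat \<Rightarrow> 'a cmat) \<Rightarrow> ('b::finite cmat \<Rightarrow> real) \<Rightarrow> ('b cmat \<Rightarrow> 'b cmat)
    \<Rightarrow> real \<Rightarrow> ('a cmat \<times> 'b cmat) \<Rightarrow> ('a cmat \<times> 'b cmat) \<Rightarrow> ('a cmat \<times> 'b cmat)" where
  "prox hA gA hB gB \<eta> X Y = (prox1 hA gA \<eta> (fst X) (fst Y), prox1 hB gB \<eta> (snd X) (snd Y))"

text \<open>OMMP iterates: ommp ... t = (Psi_t, hatPsi_t).\<close>
fun ommp :: "('a::finite \<times> 'b::finite) cmat \<Rightarrow> ('a cmat \<Rightarrow> real) \<Rightarrow> ('a cmat \<Rightarrow> 'a cmat)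
    \<Rightarrow> ('b cmat \<Rightarrow> real) \<Rightarrow> ('b cmat \<Rightarrow> 'b cmat) \<Rightarrow> real \<Rightarrow> nat
    \<Rightarrow> ('a cmat \<times> 'b cmat) \<times> ('a cmat \<times> 'b cmat)" where
  "ommp U hA gA hB gB \<eta> 0 =
     (((1 / real CARD('a)) *\<^sub>R mat 1, (1 / real CARD('b)) *\<^sub>R mat 1),
      ((1 / real CARD('a)) *\<^sub>R mat 1, (1 / real CARD('b)) *\<^sub>R mat 1))"
| "ommp U hA gA hB gB \<eta> (Suc t) =
     (let (Psi, Psih) = ommp U hA gA hB gB \<eta> t;
          Psi' = prox hA gA hB gB \<eta> Psih (game_op U Psi);
          Psih' = prox hA gA hB gB \<eta> Psih (game_op U Psi')
      in (Psi', Psih'))"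

definition ommp_avg :: "('a::finite \<times> 'b::finite) cmat \<Rightarrow> ('a cmat \<Rightarrow> real) \<Rightarrow> ('a cmat \<Rightarrow> 'a cmat)
    \<Rightarrow> ('b cmat \<Rightarrow> real) \<Rightarrow> ('b cmat \<Rightarrow> 'b cmat) \<Rightarrow> real \<Rightarrow> nat \<Rightarrow> ('a cmat \<times> 'b cmat)" where
  "ommp_avg U hA gA hB gB \<eta> N = (1 / real N) *\<^sub>R (\<Sum>t<N. fst (ommp U hA gA hB gB \<eta> t))"

definition duality_gap :: "('a::finite \<times> 'b::finite) cmat \<Rightarrow> ('a cmat \<times> 'b cmat) \<Rightarrow> real" where
  "duality_gap U Z = (SUP al\<in>spectraplex. payoff U al (snd Z)) - (INF be\<in>spectraplex. payoff U (fst Z) be)"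

definition is_eps_nash :: "('a::finite \<times> 'b::finite) cmat \<Rightarrow> real \<Rightarrow> ('a cmat \<times> 'b cmat) \<Rightarrow> bool" where
  "is_eps_nash U \<epsilon> Z \<longleftrightarrow> Z \<in> joint_states \<and> duality_gap U Z \<le> \<epsilon>"

end

theory Submission
  imports Defs
begin


lemma sum_UNIV_prod: "(\<Sum>p\<in>(UNIV::('a::finite\<times>'b::finite) set). f p) = (\<Sum>a\<in>UNIV. \<Sum>b\<in>UNIV. f (a,b))"
  by (simp add: sum.cartesian_product)

lemma trace_mult: "trace (A ** B) = (\<Sum>i\<in>UNIV. \<Sum>j\<in>UNIV. (A::'n::finite cmat)$i$j * B$j$i)"
  by (simp add: trace_def matrix_matrix_mult_def)

lemma adj_adj[simp]: "adj (adj A) = A" by (simp add: adj_def vec_eq_iff)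
lemma adj_add: "adj (A + B) = adj A + adj B" by (simp add: adj_def vec_eq_iff)
lemma adj_diff: "adj (A - B) = adj A - adj B" by (simp add: adj_def vec_eq_iff)
lemma adj_scaleR: "adj (c *\<^sub>R A) = c *\<^sub>R adj A" by (simp add: adj_def vec_eq_iff)
lemma hermitian_entry: "hermitian A \<Longrightarrow> A$j$i = cnj (A$i$j)"
  unfolding hermitian_def adj_def by (metis vec_lambda_beta)

lemma ReTr_adj: "Re (trace (A ** adj B)) = inner A (B::'n::finite cmat)"
  by (simp add: trace_mult adj_def Re_sum inner_vec_def inner_complex_def)

lemma ReTr_inner: assumes "hermitian B" shows "Re (trace (A ** B)) = inner A (B::'n::finite cmat)"
  using ReTr_adj[of A B] assms unfolding hermitian_def by simp


definition sf :: "'n::finite cmat \<Rightarrow> complex^'n \<Rightarrow> complex^'n \<Rightarrow> complex" where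
  "sf A x y = (\<Sum>i\<in>UNIV. \<Sum>j\<in>UNIV. cnj (x $ i) * A $ i $ j * y $ j)"

lemma sf_add_left: "sf A (x + y) z = sf A x z + sf A y z"
  by (simp add: sf_def algebra_simps sum.distrib)
lemma sf_add_right: "sf A z (x + y) = sf A z x + sf A z y"
  by (simp add: sf_def algebra_simps sum.distrib)
lemma sf_scale_left: "sf A (c *s x) z = cnj c * sf A x z"
  by (simp add: sf_def algebra_simps sum_distrib_left)
lemma sf_scale_right: "sf A z (c *s x) = c * sf A z x"
  by (simp add: sf_def algebra_simps sum_distrib_left)
lemma if01_mult: "(if P then 1 else 0) * (x::complex) = (if P then x else 0)"
  "x * (if P then 1 else 0) = (if P then x else 0)" by auto
lemma sf_axis: "sf A (axis i 1) (axis j 1) = A $ i $ j"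
  by (simp add: sf_def axis_def if_distrib[of cnj] if01_mult cong: if_cong)

lemma psd_sf: "psd A \<Longrightarrow> 0 \<le> Re (sf A v v)"
  unfolding psd_def sf_def by blast

lemma entry_bound:
  assumes "A \<in> spectraplex" shows "norm (A $ i $ j) \<le> 1"
proof -
  have psd: "psd A" and tr: "trace A = 1" using assms by (auto simp: spectraplex_def)
  have herm: "hermitian A" using psd by (simp add: psd_def)
  have diag: "0 \<le> Re (A $ k $ k)" for k
    using psd_sf[OF psd, of "axis k 1"] by (simp add: sf_axis)
  have diagr: "Im (A $ k $ k) = 0" for k
    using hermitian_entry[OF herm, of k k] by (metis cnj.simps(2) neg_equal_zero)
  have sumd: "(\<Sum>k\<in>UNIV. Re (A $ k $ k)) = 1"
  proof -
    have "Re (trace A) = (\<Sum>k\<in>UNIV. Re (A $ k $ k))" by (simp add: trace_def)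
    then show ?thesis using tr by simp
  qed
  have dle: "Re (A $ k $ k) \<le> 1" for k
  proof -
    have "Re (A $ k $ k) \<le> (\<Sum>k\<in>UNIV. Re (A $ k $ k))"
      by (rule member_le_sum) (auto simp: diag)
    then show ?thesis using sumd by simp
  qed
  show ?thesis
  proof (cases "i = j")
    case True
    then show ?thesis using diag[of i] diagr[of i] dle[of i]
      by (simp add: cmod_eq_Re)
  next
    case False
    define z where "z = A $ i $ j"
    show ?thesis
    proof (cases "z = 0")
      case True then show ?thesis by (simp add: z_def)
    next
      case zne: False
      define c where "c = - cnj z / complex_of_real (cmod z)"
      have zz: "z * cnj z = complex_of_real (cmod z) * complex_of_real (cmod z)"
        by (subst complex_norm_square[symmetric]) (simp add: power2_eq_square)
      have cz: "c * z = - complex_of_real (cmod z)"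
        using zne zz by (simp add: c_def field_simps)
      have cc: "cnj c * c = 1"
        using zne zz by (simp add: c_def field_simps)
      have aji: "A $ j $ i = cnj z" using hermitian_entry[OF herm, of i j] by (simp add: z_def)
      define v where "v = axis i 1 + c *s axis j (1::complex)"
      have "sf A v v = A $ i $ i + c * z + cnj c * cnj z + cnj c * c * A $ j $ j"
        unfolding v_def sf_add_left sf_add_right sf_scale_left sf_scale_right sf_axis aji z_def
        by (simp add: algebra_simps)
      also have "\<dots> = A $ i $ i - 2 * complex_of_real (cmod z) + A $ j $ j"
      proof -
        have "cnj c * cnj z = cnj (c * z)" by simp
        then show ?thesis using cz cc by simp
      qed
      finally have "0 \<le> Re (A $ i $ i) - 2 * cmod z + Re (A $ j $ j)"
        using psd_sf[OF psd, of v] by simp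
      then show ?thesis using dle[of i] dle[of j] by (simp add: z_def)
    qed
  qed
qed


lemma norm_vec_le_sum: "norm (x :: 'a::real_normed_vector^'n::finite) \<le> (\<Sum>i\<in>UNIV. norm (x $ i))"
  by (simp add: norm_vec_def L2_set_le_sum)

lemma cscaleR: "c *\<^sub>R (z::complex) = of_real c * z"
  by (simp add: scaleR_conv_of_real)

lemma cmat_scaleR_entry [simp]: "(c *\<^sub>R (A::'n::finite cmat)) $ i $ j = of_real c * A $ i $ j"
  by (simp add: cscaleR)

lemma psd_sf_iff: "psd A \<longleftrightarrow> hermitian A \<and> (\<forall>v. 0 \<le> Re (sf A v v))"
  unfolding psd_def sf_def by blast

lemma spectraplex_herm: "A \<in> spectraplex \<Longrightarrow> hermitian A"
  by (simp add: spectraplex_def psd_def)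

lemma hermitian_add: "hermitian A \<Longrightarrow> hermitian B \<Longrightarrow> hermitian (A + B)"
  by (simp add: hermitian_def adj_add)
lemma hermitian_diff: "hermitian A \<Longrightarrow> hermitian B \<Longrightarrow> hermitian (A - B)"
  by (simp add: hermitian_def adj_diff)
lemma hermitian_scaleR: "hermitian A \<Longrightarrow> hermitian (c *\<^sub>R A)"
  by (simp add: hermitian_def adj_scaleR)
lemma hermitian_uminus: "hermitian A \<Longrightarrow> hermitian (- A)"
  using hermitian_scaleR[of A "-1"] by simp
lemma hermitian_0: "hermitian 0"
  by (simp add: hermitian_def adj_def vec_eq_iff)

lemma sf_lin: "sf (u *\<^sub>R A + v *\<^sub>R B) x x = of_real u * sf A x x + of_real v * sf B x x"
  by (simp add: sf_def algebra_simps sum.distrib sum_distrib_left cscaleR)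

lemma trace_lin: "trace (u *\<^sub>R A + v *\<^sub>R (B::'n::finite cmat)) = of_real u * trace A + of_real v * trace B"
  by (simp add: trace_def sum.distrib sum_distrib_left cscaleR)

lemma convex_spectraplex: "convex (spectraplex :: 'n::finite cmat set)"
proof (rule convexI)
  fix A B :: "'n cmat" and u v :: real
  assume A: "A \<in> spectraplex" and B: "B \<in> spectraplex" and u: "0 \<le> u" and v: "0 \<le> v" and uv: "u + v = 1"
  have "hermitian (u *\<^sub>R A + v *\<^sub>R B)"
    using A B by (intro hermitian_add hermitian_scaleR spectraplex_herm)
  moreover have "0 \<le> Re (sf (u *\<^sub>R A + v *\<^sub>R B) x x)" for x
  proof -
    have "0 \<le> Re (sf A x x)" "0 \<le> Re (sf B x x)"
      using A B by (auto simp: spectraplex_def psd_sf_iff)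
    then show ?thesis using u v by (simp add: sf_lin)
  qed
  moreover have "trace (u *\<^sub>R A + v *\<^sub>R B) = 1"
    using A B uv by (simp add: trace_lin spectraplex_def flip: of_real_add)
  ultimately show "u *\<^sub>R A + v *\<^sub>R B \<in> spectraplex"
    by (simp add: spectraplex_def psd_sf_iff)
qed

lemma continuous_adj: "continuous_on S (\<lambda>A::'n::finite cmat. adj A)"
  unfolding adj_def by (intro continuous_intros)

lemma continuous_sf: "continuous_on S (\<lambda>A::'n::finite cmat. sf A v v)"
  unfolding sf_def by (intro continuous_intros)

lemma continuous_trace: "continuous_on S (\<lambda>A::'n::finite cmat. trace A)"
  unfolding trace_def by (intro continuous_intros)

lemma closed_spectraplex: "closed (spectraplex :: 'n::finite cmat set)"
proof -
  have eq: "spectraplex = {A::'n cmat. adj A = A} \<inter> (\<Inter>v. {A. 0 \<le> Re (sf A v v)}) \<inter> {A. trace A = 1}"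
    by (auto simp: spectraplex_def psd_sf_iff hermitian_def)
  have c: "continuous_on UNIV (\<lambda>A::'n cmat. Re (sf A v v))" for v
    by (intro continuous_intros continuous_sf)
  have c2: "closed {A::'n cmat. 0 \<le> Re (sf A v v)}" for v
    by (rule closed_Collect_le[OF continuous_on_const c])
  have c3: "closed (\<Inter>v. {A::'n cmat. 0 \<le> Re (sf A v v)})"
    by (rule closed_INT) (simp add: c2)
  have c4: "closed {A::'n cmat. adj A = A}"
    by (rule closed_Collect_eq[OF continuous_adj continuous_on_id])
  have c5: "closed {A::'n cmat. trace A = 1}"
    by (rule closed_Collect_eq[OF continuous_trace continuous_on_const])
  show ?thesis unfolding eq using c3 c4 c5 by (intro closed_Int)
qed

lemma spectraplex_norm_bound:
  assumes A: "A \<in> spectraplex" shows "norm (A::'n::finite cmat) \<le> real CARD('n) * real CARD('n)"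
proof -
  have r: "norm (A $ i) \<le> real CARD('n)" for i
  proof -
    have "norm (A $ i) \<le> (\<Sum>j\<in>UNIV. norm (A $ i $ j))" by (rule norm_vec_le_sum)
    also have "\<dots> \<le> (\<Sum>j\<in>(UNIV::'n set). 1)" by (intro sum_mono entry_bound[OF A])
    finally show ?thesis by simp
  qed
  have "norm A \<le> (\<Sum>i\<in>UNIV. norm (A $ i))" by (rule norm_vec_le_sum)
  also have "\<dots> \<le> (\<Sum>i\<in>(UNIV::'n set). real CARD('n))" by (intro sum_mono r)
  finally show ?thesis by simp
qed

lemma bounded_spectraplex: "bounded (spectraplex :: 'n::finite cmat set)"
  unfolding bounded_iff using spectraplex_norm_bound by blast

lemma compact_spectraplex: "compact (spectraplex :: 'n::finite cmat set)"
  using closed_spectraplex bounded_spectraplex by (simp add: compact_eq_bounded_closed)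

lemma init_spectraplex: "(1 / real CARD('n)) *\<^sub>R (mat 1 :: 'n::finite cmat) \<in> spectraplex"
proof -
  have h: "hermitian (mat 1 :: 'n cmat)"
    by (simp add: hermitian_def adj_def mat_def vec_eq_iff)
  have q: "0 \<le> Re (sf ((1 / real CARD('n)) *\<^sub>R (mat 1 :: 'n cmat)) v v)" for v
  proof -
    have "sf ((1 / real CARD('n)) *\<^sub>R (mat 1 :: 'n cmat)) v v
        = (\<Sum>i\<in>UNIV. of_real (1 / real CARD('n)) * (cnj (v $ i) * v $ i))"
    proof -
      have e: "cnj (v $ i) * ((1 / real CARD('n)) *\<^sub>R (mat 1 :: 'n cmat)) $ i $ j * v $ j
          = (if j = i then of_real (1 / real CARD('n)) * (cnj (v $ i) * v $ i) else 0)" for i j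
        by (auto simp: mat_def cscaleR field_simps)
      show ?thesis unfolding sf_def e by simp
    qed
    also have "Re \<dots> = (\<Sum>i\<in>UNIV. (1 / real CARD('n)) * (cmod (v $ i))^2)"
      by (simp add: Re_sum complex_mult_cnj power2_eq_square cmod_def)
    finally show ?thesis by (simp add: sum_nonneg)
  qed
  have t: "trace ((1 / real CARD('n)) *\<^sub>R (mat 1 :: 'n cmat)) = 1"
    by (simp add: trace_def mat_def cscaleR)
  show ?thesis using h q t
    by (simp add: spectraplex_def psd_sf_iff hermitian_scaleR)
qed

lemma spectraplex_nonempty: "(spectraplex :: 'n::finite cmat set) \<noteq> {}"
  using init_spectraplex by blast


lemma trace_mult_diff_right: "trace (M ** (A - B)) = trace (M ** A) - trace (M ** (B::'n::finite cmat))"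
  by (simp add: trace_mult algebra_simps sum_subtractf)
lemma trace_mult_diff_left: "trace ((A - B) ** M) = trace (A ** M) - trace (B ** (M::'n::finite cmat))"
  by (simp add: trace_mult algebra_simps sum_subtractf)
lemma trace_mult_add_right: "trace (M ** (A + B)) = trace (M ** A) + trace (M ** (B::'n::finite cmat))"
  by (simp add: trace_mult algebra_simps sum.distrib)
lemma trace_mult_add_left: "trace ((A + B) ** M) = trace (A ** M) + trace (B ** (M::'n::finite cmat))"
  by (simp add: trace_mult algebra_simps sum.distrib)
lemma trace_mult_scale_right: "trace (M ** (c *\<^sub>R A)) = of_real c * trace (M ** (A::'n::finite cmat))"
  by (simp add: trace_mult algebra_simps sum_distrib_left cscaleR)
lemma trace_mult_scale_left: "trace ((c *\<^sub>R A) ** M) = of_real c * trace (A ** (M::'n::finite cmat))"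
  by (simp add: trace_mult algebra_simps sum_distrib_left cscaleR)

lemma continuous_ReTr_right: "continuous_on S (\<lambda>C. Re (trace (M ** (C - X :: 'n::finite cmat))))"
  unfolding trace_mult by (intro continuous_intros)
lemma continuous_ReTr_left: "continuous_on S (\<lambda>C. Re (trace ((C - X :: 'n::finite cmat) ** M)))"
  unfolding trace_mult by (intro continuous_intros)

lemma diff_with_grad_cont: "diff_with_grad h g \<Longrightarrow> continuous_on spectraplex h"
  unfolding diff_with_grad_def by (rule has_derivative_continuous_on) blast

lemma prox1_props:
  fixes h :: "'n::finite cmat \<Rightarrow> real" and X Y :: "'n cmat"
  assumes dg: "diff_with_grad h g" and eta: "\<eta> > 0"
  defines "Z \<equiv> prox1 h g \<eta> X Y"
  shows "Z \<in> spectraplex \<and> (\<forall>C\<in>spectraplex.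
     \<eta> * Re (trace (Y ** (C - Z))) \<le> Re (trace ((C - Z) ** g Z)) - Re (trace ((C - Z) ** g X)))"
proof -
  define \<phi> where "\<phi> C = Re (trace (Y ** (C - X))) - (1 / \<eta>) * bregman h g C X" for C
  have cont: "continuous_on spectraplex \<phi>"
    unfolding \<phi>_def bregman_def
    by (intro continuous_intros diff_with_grad_cont[OF dg] continuous_ReTr_right continuous_ReTr_left)
  obtain Z0 where "Z0 \<in> spectraplex" "\<forall>y\<in>spectraplex. \<phi> y \<le> \<phi> Z0"
    using continuous_attains_sup[OF compact_spectraplex spectraplex_nonempty cont] by blast
  then have ZS: "Z \<in> spectraplex \<and> (\<forall>y\<in>spectraplex. \<phi> y \<le> \<phi> Z)"
    unfolding Z_def prox1_def \<phi>_def[symmetric]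
    by (intro arg_maxI[where P="\<lambda>C. C \<in> spectraplex" and f=\<phi> and x=Z0
          and Q="\<lambda>x. x \<in> spectraplex \<and> (\<forall>y\<in>spectraplex. \<phi> y \<le> \<phi> x)"]) (auto simp: not_less)
  then have Zin: "Z \<in> spectraplex" and Zmax: "\<And>y. y \<in> spectraplex \<Longrightarrow> \<phi> y \<le> \<phi> Z" by auto
  have VI: "\<eta> * Re (trace (Y ** (C - Z))) \<le> Re (trace ((C - Z) ** g Z)) - Re (trace ((C - Z) ** g X))"
    if C: "C \<in> spectraplex" for C
  proof -
    define W where "W = C - Z"
    define p where "p s = Z + s *\<^sub>R W" for s :: real
    define A where "A = Re (trace (Y ** W)) + (1 / \<eta>) * Re (trace (W ** g X))"
    define D where "D = Re (trace (W ** g Z))"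
    have pS: "p s \<in> spectraplex" if "s \<in> {0..1}" for s
    proof -
      have "p s = (1 - s) *\<^sub>R Z + s *\<^sub>R C" by (simp add: p_def W_def algebra_simps)
      then show ?thesis using that convex_spectraplex Zin C
        by (auto simp: convex_def)
    qed
    have diff: "\<phi> (p s) - \<phi> Z = s * A - (1 / \<eta>) * (h (p s) - h Z)" for s
    proof -
      have e1: "p s - X = (Z - X) + s *\<^sub>R W" "p s - Z = s *\<^sub>R W" by (simp_all add: p_def)
      have "Re (trace (Y ** (p s - X))) = Re (trace (Y ** (Z - X))) + s * Re (trace (Y ** W))"
        by (simp add: e1 trace_mult_add_right trace_mult_scale_right)
      moreover have "Re (trace ((p s - X) ** g X)) = Re (trace ((Z - X) ** g X)) + s * Re (trace (W ** g X))"
        by (simp add: e1 trace_mult_add_left trace_mult_scale_left)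
      ultimately show ?thesis
        by (simp add: \<phi>_def bregman_def A_def algebra_simps)
    qed
    have le: "\<eta> * A \<le> (h (p s) - h Z) / s" if s: "0 < s" "s < 1" for s
    proof -
      have "\<phi> (p s) \<le> \<phi> Z" using Zmax pS s by auto
      then have "s * A \<le> (1 / \<eta>) * (h (p s) - h Z)" using diff[of s] by simp
      then have "\<eta> * (s * A) \<le> h (p s) - h Z" using eta by (simp add: field_simps)
      then show ?thesis using s by (simp add: field_simps)
    qed
    have hd: "(h has_derivative (\<lambda>H. Re (trace (H ** g Z)))) (at Z within spectraplex)"
      using dg Zin unfolding diff_with_grad_def by blast
    have pd: "(p has_derivative (\<lambda>s. s *\<^sub>R W)) (at 0 within {0..1})"
      unfolding p_def by (auto intro!: derivative_eq_intros)
    have img: "p ` {0..1} \<subseteq> spectraplex" using pS by auto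
    have p0: "p 0 = Z" by (simp add: p_def)
    have hd2: "(h has_derivative (\<lambda>H. Re (trace (H ** g Z)))) (at (p 0) within p ` {0..1})"
      using has_derivative_subset[OF hd img] p0 by simp
    have comp: "((h \<circ> p) has_derivative ((\<lambda>H. Re (trace (H ** g Z))) \<circ> (\<lambda>s. s *\<^sub>R W))) (at 0 within {0..1})"
      by (rule diff_chain_within[OF pd hd2])
    have eqf: "((\<lambda>H. Re (trace (H ** g Z))) \<circ> (\<lambda>s. s *\<^sub>R W)) = (*) D"
      by (auto simp: D_def trace_mult_scale_left)
    have "((h \<circ> p) has_field_derivative D) (at 0 within {0..1})"
      unfolding has_field_derivative_def using comp eqf by simp
    then have lim: "((\<lambda>s. ((h \<circ> p) s - (h \<circ> p) 0) / (s - 0)) \<longlongrightarrow> D) (at_right 0)"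
      unfolding has_field_derivative_iff by (simp add: at_within_Icc_at_right)
    have ev: "eventually (\<lambda>s. \<eta> * A \<le> ((h \<circ> p) s - (h \<circ> p) 0) / (s - 0)) (at_right (0::real))"
    proof -
      have "eventually (\<lambda>s. 0 < s \<and> s < (1::real)) (at_right 0)"
        using eventually_at_right_real[of 0 1] by simp
      then show ?thesis by eventually_elim (use le p0 in auto)
    qed
    have "\<eta> * A \<le> D"
      by (rule tendsto_lowerbound[OF lim ev]) simp
    then show ?thesis using eta
      by (simp add: A_def D_def W_def algebra_simps)
  qed
  show ?thesis using Zin VI by blast
qed


lemma inner_prod_split: "inner X (Y :: 'a::real_inner \<times> 'b::real_inner) = inner (fst X) (fst Y) + inner (snd X) (snd Y)"
  by (simp add: inner_prod_def)

lemma ip_inner: "Y \<in> herm_pairs \<Longrightarrow> ip X Y = inner X Y"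
  by (simp add: herm_pairs_def ip_def ReTr_inner inner_prod_split)

lemma joint_herm: "X \<in> joint_states \<Longrightarrow> X \<in> herm_pairs"
  by (auto simp: joint_states_def herm_pairs_def spectraplex_herm)

lemma herm_pairs_diff: "X \<in> herm_pairs \<Longrightarrow> Y \<in> herm_pairs \<Longrightarrow> X - Y \<in> herm_pairs"
  by (simp add: herm_pairs_def hermitian_diff)
lemma herm_pairs_add: "X \<in> herm_pairs \<Longrightarrow> Y \<in> herm_pairs \<Longrightarrow> X + Y \<in> herm_pairs"
  by (simp add: herm_pairs_def hermitian_add)
lemma herm_pairs_scaleR: "X \<in> herm_pairs \<Longrightarrow> c *\<^sub>R X \<in> herm_pairs"
  by (simp add: herm_pairs_def hermitian_scaleR)
lemma herm_pairs_uminus: "X \<in> herm_pairs \<Longrightarrow> - X \<in> herm_pairs"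
  by (simp add: herm_pairs_def hermitian_uminus)
lemma herm_pairs_0: "0 \<in> herm_pairs"
  by (simp add: herm_pairs_def hermitian_0)

lemma joint_diff_herm: "X \<in> joint_states \<Longrightarrow> Y \<in> joint_states \<Longrightarrow> X - Y \<in> herm_pairs"
  by (intro herm_pairs_diff joint_herm)

lemma grad_herm:
  assumes "diff_with_grad gA' gA" "diff_with_grad hB gB" "X \<in> joint_states"
  shows "reg_grad gA gB X \<in> herm_pairs"
  using assms by (auto simp: diff_with_grad_def reg_grad_def herm_pairs_def joint_states_def)

lemma prox_props:
  fixes Y :: "'a::finite cmat \<times> 'b::finite cmat"
  assumes dA: "diff_with_grad hA gA" and dB: "diff_with_grad hB gB" and eta: "\<eta> > 0"
    and X: "X \<in> joint_states"
  defines "Z \<equiv> prox hA gA hB gB \<eta> X Y"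
  shows "Z \<in> joint_states \<and> (\<forall>C\<in>joint_states.
     \<eta> * ip Y (C - Z) \<le> inner (C - Z) (reg_grad gA gB Z - reg_grad gA gB X))"
proof -
  have A: "fst Z \<in> spectraplex \<and> (\<forall>C\<in>spectraplex.
     \<eta> * Re (trace (fst Y ** (C - fst Z))) \<le> Re (trace ((C - fst Z) ** gA (fst Z))) - Re (trace ((C - fst Z) ** gA (fst X))))"
    unfolding Z_def prox_def fst_conv by (rule prox1_props[OF dA eta])
  have B: "snd Z \<in> spectraplex \<and> (\<forall>C\<in>spectraplex.
     \<eta> * Re (trace (snd Y ** (C - snd Z))) \<le> Re (trace ((C - snd Z) ** gB (snd Z))) - Re (trace ((C - snd Z) ** gB (snd X))))"
    unfolding Z_def prox_def snd_conv by (rule prox1_props[OF dB eta])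
  have ZJ: "Z \<in> joint_states" using A B by (simp add: joint_states_def mem_Times_iff)
  have XA: "fst X \<in> spectraplex" and XB: "snd X \<in> spectraplex" using X by (auto simp: joint_states_def)
  have hAZ: "hermitian (gA (fst Z))" "hermitian (gA (fst X))"
    using dA A XA by (auto simp: diff_with_grad_def)
  have hBZ: "hermitian (gB (snd Z))" "hermitian (gB (snd X))"
    using dB B XB by (auto simp: diff_with_grad_def)
  have "\<eta> * ip Y (C - Z) \<le> inner (C - Z) (reg_grad gA gB Z - reg_grad gA gB X)" if C: "C \<in> joint_states" for C
  proof -
    have CA: "fst C \<in> spectraplex" and CB: "snd C \<in> spectraplex" using C by (auto simp: joint_states_def)
    have hd: "hermitian (fst C - fst Z)" "hermitian (snd C - snd Z)"
      using CA CB A B by (auto intro: hermitian_diff spectraplex_herm)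
    have "\<eta> * ip Y (C - Z) = \<eta> * Re (trace (fst Y ** (fst C - fst Z))) + \<eta> * Re (trace (snd Y ** (snd C - snd Z)))"
      by (simp add: ip_def algebra_simps)
    also have "\<dots> \<le> (Re (trace ((fst C - fst Z) ** gA (fst Z))) - Re (trace ((fst C - fst Z) ** gA (fst X))))
        + (Re (trace ((snd C - snd Z) ** gB (snd Z))) - Re (trace ((snd C - snd Z) ** gB (snd X))))"
      using A B CA CB by (intro add_mono) auto
    also have "\<dots> = inner (C - Z) (reg_grad gA gB Z - reg_grad gA gB X)"
      by (simp add: ReTr_inner hAZ hBZ reg_grad_def inner_prod_split inner_diff_right)
    finally show ?thesis .
  qed
  then show ?thesis using ZJ by blast
qed


context
  fixes nrm :: "('a::finite cmat \<times> 'b::finite cmat) \<Rightarrow> real"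
  assumes nrm: "is_norm_on nrm herm_pairs"
begin

lemma nrm_nonneg: "X \<in> herm_pairs \<Longrightarrow> 0 \<le> nrm X"
  using nrm by (simp add: is_norm_on_def)
lemma nrm_zero_iff: "X \<in> herm_pairs \<Longrightarrow> nrm X = 0 \<longleftrightarrow> X = 0"
  using nrm by (simp add: is_norm_on_def)
lemma nrm_scale: "X \<in> herm_pairs \<Longrightarrow> nrm (c *\<^sub>R X) = \<bar>c\<bar> * nrm X"
  using nrm by (simp add: is_norm_on_def)
lemma nrm_tri: "X \<in> herm_pairs \<Longrightarrow> Y \<in> herm_pairs \<Longrightarrow> nrm (X + Y) \<le> nrm X + nrm Y"
  using nrm by (simp add: is_norm_on_def)
lemma nrm_0: "nrm 0 = 0"
  using nrm_zero_iff[OF herm_pairs_0] by simp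
lemma nrm_uminus: "X \<in> herm_pairs \<Longrightarrow> nrm (- X) = nrm X"
  using nrm_scale[of X "-1"] by simp
lemma nrm_commute: "X \<in> herm_pairs \<Longrightarrow> Y \<in> herm_pairs \<Longrightarrow> nrm (X - Y) = nrm (Y - X)"
  using nrm_uminus[OF herm_pairs_diff[of X Y]] by simp

definition hp :: "'a cmat \<times> 'b cmat \<Rightarrow> 'a cmat \<times> 'b cmat" where
  "hp X = ((1/2) *\<^sub>R (fst X + adj (fst X)), (1/2) *\<^sub>R (snd X + adj (snd X)))"

lemma hp_herm: "hp X \<in> herm_pairs"
  by (simp add: hp_def herm_pairs_def hermitian_def adj_add adj_scaleR add.commute)

lemma hp_id: "X \<in> herm_pairs \<Longrightarrow> hp X = X"
  by (simp add: hp_def herm_pairs_def hermitian_def prod_eq_iff scaleR_2[symmetric])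

lemma hp_lin: "hp (u *\<^sub>R x + v *\<^sub>R y) = u *\<^sub>R hp x + v *\<^sub>R hp y"
  by (simp add: hp_def adj_add adj_scaleR algebra_simps)

lemma convex_N: "convex_on UNIV (\<lambda>X. nrm (hp X))"
  unfolding convex_on_def
proof (intro conjI convex_UNIV ballI allI impI)
  fix x y :: "'a cmat \<times> 'b cmat" and u v :: real
  assume u: "0 \<le> u" and v: "0 \<le> v" and "u + v = 1"
  have "nrm (hp (u *\<^sub>R x + v *\<^sub>R y)) = nrm (u *\<^sub>R hp x + v *\<^sub>R hp y)" by (simp add: hp_lin)
  also have "\<dots> \<le> nrm (u *\<^sub>R hp x) + nrm (v *\<^sub>R hp y)"
    by (intro nrm_tri herm_pairs_scaleR hp_herm)
  also have "\<dots> = u * nrm (hp x) + v * nrm (hp y)"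
    using u v by (simp add: nrm_scale hp_herm)
  finally show "nrm (hp (u *\<^sub>R x + v *\<^sub>R y)) \<le> u * nrm (hp x) + v * nrm (hp y)" .
qed

lemma cont_N: "continuous_on UNIV (\<lambda>X. nrm (hp X))"
  by (rule convex_on_continuous[OF open_UNIV convex_N])

lemma closed_herm_pairs: "closed (herm_pairs :: ('a cmat \<times> 'b cmat) set)"
proof -
  have e: "herm_pairs = {Z::'a cmat \<times> 'b cmat. adj (fst Z) = fst Z} \<inter> {Z. adj (snd Z) = snd Z}"
    by (auto simp: herm_pairs_def hermitian_def)
  have c1: "continuous_on UNIV (\<lambda>Z::'a cmat \<times> 'b cmat. adj (fst Z))"
    unfolding adj_def by (intro continuous_intros)
  have c2: "continuous_on UNIV (\<lambda>Z::'a cmat \<times> 'b cmat. adj (snd Z))"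
    unfolding adj_def by (intro continuous_intros)
  show ?thesis unfolding e
    by (intro closed_Int closed_Collect_eq c1 c2 continuous_intros)
qed

lemma nrm_lower: "\<exists>c>0. \<forall>X\<in>herm_pairs. c * norm X \<le> nrm X"
proof -
  define S1 where "S1 = herm_pairs \<inter> sphere (0::'a cmat \<times> 'b cmat) 1"
  have cS: "compact S1" unfolding S1_def
    by (intro closed_Int_compact closed_herm_pairs compact_sphere)
  show ?thesis
  proof (cases "S1 = {}")
    case True
    have "X = 0" if "X \<in> herm_pairs" for X :: "'a cmat \<times> 'b cmat"
    proof (rule ccontr)
      assume "X \<noteq> 0"
      then have "(1 / norm X) *\<^sub>R X \<in> S1"
        using that by (simp add: S1_def herm_pairs_scaleR)
      then show False using True by blast
    qed
    then have "\<forall>X\<in>herm_pairs. 1 * norm X \<le> nrm X" by (metis nrm_0 norm_zero order_refl mult_1)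
    then show ?thesis by (intro exI[of _ 1]) auto
  next
    case False
    obtain x0 where x0: "x0 \<in> S1" "\<forall>y\<in>S1. nrm (hp x0) \<le> nrm (hp y)"
      using continuous_attains_inf[OF cS False continuous_on_subset[OF cont_N]] by blast
    have x0h: "x0 \<in> herm_pairs" and x0n: "norm x0 = 1" using x0 by (auto simp: S1_def)
    then have x0nz: "x0 \<noteq> 0" by auto
    define c where "c = nrm x0"
    have cpos: "c > 0" using nrm_nonneg[OF x0h] nrm_zero_iff[OF x0h] x0nz by (auto simp: c_def)
    have "c * norm X \<le> nrm X" if X: "X \<in> herm_pairs" for X
    proof (cases "X = 0")
      case True then show ?thesis by (simp add: nrm_0)
    next
      case False
      have Xn: "(1 / norm X) *\<^sub>R X \<in> S1" using X False by (simp add: S1_def herm_pairs_scaleR)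
      have "c \<le> nrm ((1 / norm X) *\<^sub>R X)"
        using x0(2) Xn hp_id[OF x0h] hp_id[OF herm_pairs_scaleR[OF X]] by (auto simp: c_def)
      also have "\<dots> = nrm X / norm X" using X by (simp add: nrm_scale)
      finally show ?thesis using False by (simp add: field_simps)
    qed
    then show ?thesis using cpos by blast
  qed
qed

lemma dual_bound:
  assumes W: "W \<in> herm_pairs"
  shows "ip Y W \<le> dual_norm nrm Y * nrm W"
proof -
  obtain c where c: "c > 0" "\<forall>X\<in>herm_pairs. c * norm X \<le> nrm X" using nrm_lower by blast
  define T where "T = {X\<in>herm_pairs. nrm X \<le> 1}"
  have bdd: "bdd_above ((\<lambda>X. ip Y X) ` T)"
  proof (rule bdd_aboveI2)
    fix X assume X: "X \<in> T"
    have Xh: "X \<in> herm_pairs" and X1: "nrm X \<le> 1" using X by (auto simp: T_def)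
    have "ip Y X = inner Y X" by (rule ip_inner[OF Xh])
    also have "\<dots> \<le> norm Y * norm X" by (rule norm_cauchy_schwarz)
    also have "\<dots> \<le> norm Y * (1 / c)"
    proof (rule mult_left_mono)
      have "c * norm X \<le> 1" using c Xh X1 by force
      then show "norm X \<le> 1 / c" using c by (simp add: field_simps)
    qed simp
    finally show "ip Y X \<le> norm Y * (1 / c)" .
  qed
  show ?thesis
  proof (cases "W = 0")
    case True then show ?thesis by (simp add: ip_inner herm_pairs_0 nrm_0)
  next
    case False
    have np: "nrm W > 0" using nrm_nonneg[OF W] nrm_zero_iff[OF W] False by auto
    have WT: "(1 / nrm W) *\<^sub>R W \<in> T" using W np by (simp add: T_def herm_pairs_scaleR nrm_scale)
    have "ip Y ((1 / nrm W) *\<^sub>R W) \<le> dual_norm nrm Y"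
      unfolding dual_norm_def T_def[symmetric] by (rule cSUP_upper[OF WT bdd])
    moreover have "ip Y ((1 / nrm W) *\<^sub>R W) = ip Y W / nrm W"
      using W herm_pairs_scaleR[OF W] by (simp add: ip_inner)
    ultimately show ?thesis using np by (simp add: field_simps)
  qed
qed

end


lemma herm_cnj: "hermitian A \<Longrightarrow> cnj (A $ i $ j) = A $ j $ i"
  using hermitian_entry[of A j i] by simp

lemma mult_if0: "(x::complex) * (if P then y else 0) = (if P then x * y else 0)" by simp
lemma sum_if0: "(\<Sum>b\<in>A. if P then f b else (0::complex)) = (if P then (\<Sum>b\<in>A. f b) else 0)" by simp

lemma ptraceB_entry:
  "(ptrace_B (adj U ** kron (mat 1) be)) $ i $ k
     = (\<Sum>j\<in>UNIV. \<Sum>b\<in>UNIV. cnj (U $ (k,b) $ (i,j)) * be $ b $ j)"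
  by (simp add: ptrace_B_def matrix_matrix_mult_def adj_def kron_def mat_def sum_UNIV_prod
      if01_mult mult_if0 sum_if0 cong: if_cong)

lemma ptraceA_entry:
  "(ptrace_A (adj U ** kron al (mat 1))) $ j $ l
     = (\<Sum>i\<in>UNIV. \<Sum>a\<in>UNIV. cnj (U $ (a,l) $ (i,j)) * al $ a $ i)"
  by (simp add: ptrace_A_def matrix_matrix_mult_def adj_def kron_def mat_def sum_UNIV_prod
      if01_mult mult_if0 sum_if0 cong: if_cong)

lemma trace_U_kron:
  "trace (U ** kron al be) = (\<Sum>k\<in>UNIV. \<Sum>b\<in>UNIV. \<Sum>i\<in>UNIV. \<Sum>j\<in>UNIV.
      U $ (k,b) $ (i,j) * (al $ i $ k * be $ j $ b))"
  by (simp add: trace_mult kron_def sum_UNIV_prod)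

lemma gameA:
  assumes "hermitian al" "hermitian be"
  shows "Re (trace (ptrace_B (adj U ** kron (mat 1) be) ** al)) = payoff U al be"
proof -
  have "trace (ptrace_B (adj U ** kron (mat 1) be) ** al)
      = (\<Sum>i\<in>UNIV. \<Sum>k\<in>UNIV. \<Sum>j\<in>UNIV. \<Sum>b\<in>UNIV. cnj (U $ (k,b) $ (i,j)) * be $ b $ j * al $ k $ i)"
    by (simp add: trace_mult ptraceB_entry sum_distrib_right)
  also have "\<dots> = (\<Sum>k\<in>UNIV. \<Sum>i\<in>UNIV. \<Sum>j\<in>UNIV. \<Sum>b\<in>UNIV. cnj (U $ (k,b) $ (i,j)) * be $ b $ j * al $ k $ i)"
    by (rule sum.swap)
  also have "\<dots> = (\<Sum>k\<in>UNIV. \<Sum>i\<in>UNIV. \<Sum>b\<in>UNIV. \<Sum>j\<in>UNIV. cnj (U $ (k,b) $ (i,j)) * be $ b $ j * al $ k $ i)"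
    by (rule sum.cong[OF refl], rule sum.cong[OF refl], rule sum.swap)
  also have "\<dots> = (\<Sum>k\<in>UNIV. \<Sum>b\<in>UNIV. \<Sum>i\<in>UNIV. \<Sum>j\<in>UNIV. cnj (U $ (k,b) $ (i,j)) * be $ b $ j * al $ k $ i)"
    by (rule sum.cong[OF refl], rule sum.swap)
  also have "\<dots> = cnj (trace (U ** kron al be))"
    by (simp add: trace_U_kron herm_cnj[OF assms(1)] herm_cnj[OF assms(2)] algebra_simps)
  finally show ?thesis by (simp add: payoff_def)
qed

lemma gameB:
  assumes "hermitian al" "hermitian be"
  shows "Re (trace (ptrace_A (adj U ** kron al (mat 1)) ** be)) = payoff U al be"
proof -
  have "trace (ptrace_A (adj U ** kron al (mat 1)) ** be)
      = (\<Sum>j\<in>UNIV. \<Sum>l\<in>UNIV. \<Sum>i\<in>UNIV. \<Sum>a\<in>UNIV. cnj (U $ (a,l) $ (i,j)) * al $ a $ i * be $ l $ j)"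
    by (simp add: trace_mult ptraceA_entry sum_distrib_right)
  also have "\<dots> = (\<Sum>j\<in>UNIV. \<Sum>l\<in>UNIV. \<Sum>a\<in>UNIV. \<Sum>i\<in>UNIV. cnj (U $ (a,l) $ (i,j)) * al $ a $ i * be $ l $ j)"
    by (rule sum.cong[OF refl], rule sum.cong[OF refl], rule sum.swap)
  also have "\<dots> = (\<Sum>j\<in>UNIV. \<Sum>a\<in>UNIV. \<Sum>l\<in>UNIV. \<Sum>i\<in>UNIV. cnj (U $ (a,l) $ (i,j)) * al $ a $ i * be $ l $ j)"
    by (rule sum.cong[OF refl], rule sum.swap)
  also have "\<dots> = (\<Sum>a\<in>UNIV. \<Sum>j\<in>UNIV. \<Sum>l\<in>UNIV. \<Sum>i\<in>UNIV. cnj (U $ (a,l) $ (i,j)) * al $ a $ i * be $ l $ j)"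
    by (rule sum.swap)
  also have "\<dots> = (\<Sum>a\<in>UNIV. \<Sum>l\<in>UNIV. \<Sum>j\<in>UNIV. \<Sum>i\<in>UNIV. cnj (U $ (a,l) $ (i,j)) * al $ a $ i * be $ l $ j)"
    by (rule sum.cong[OF refl], rule sum.swap)
  also have "\<dots> = (\<Sum>a\<in>UNIV. \<Sum>l\<in>UNIV. \<Sum>i\<in>UNIV. \<Sum>j\<in>UNIV. cnj (U $ (a,l) $ (i,j)) * al $ a $ i * be $ l $ j)"
    by (rule sum.cong[OF refl], rule sum.cong[OF refl], rule sum.swap)
  also have "\<dots> = cnj (trace (U ** kron al be))"
    by (simp add: trace_U_kron herm_cnj[OF assms(1)] herm_cnj[OF assms(2)] algebra_simps)
  finally show ?thesis by (simp add: payoff_def)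
qed

lemma trace_mult_neg_left: "trace ((- A) ** B) = - trace (A ** (B::'n::finite cmat))"
  by (simp add: trace_mult sum_negf)

lemma game_gap:
  assumes Z: "Z \<in> joint_states" and P: "P \<in> joint_states"
  shows "ip (game_op U P) (Z - P) = payoff U (fst Z) (snd P) - payoff U (fst P) (snd Z)"
proof -
  have h: "hermitian (fst Z)" "hermitian (snd Z)" "hermitian (fst P)" "hermitian (snd P)"
    using Z P by (auto simp: joint_states_def spectraplex_herm)
  show ?thesis
    by (simp add: ip_def game_op_def trace_mult_diff_right trace_mult_neg_left gameA gameB h)
qed

lemma payoff_expand:
  "payoff U al be = Re (\<Sum>k\<in>UNIV. \<Sum>b\<in>UNIV. \<Sum>i\<in>UNIV. \<Sum>j\<in>UNIV.
      U $ (k,b) $ (i,j) * (al $ i $ k * be $ j $ b))"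
  by (simp add: payoff_def trace_U_kron)

lemma payoff_add_left: "payoff U (x + y) be = payoff U x be + payoff U y be"
  by (simp add: payoff_expand algebra_simps sum.distrib)
lemma payoff_scale_left: "payoff U (c *\<^sub>R x) be = c * payoff U x be"
  by (simp add: payoff_expand algebra_simps sum_distrib_left)
lemma payoff_zero_left: "payoff U 0 be = 0"
  by (simp add: payoff_expand)
lemma payoff_add_right: "payoff U al (x + y) = payoff U al x + payoff U al y"
  by (simp add: payoff_expand algebra_simps sum.distrib)
lemma payoff_scale_right: "payoff U al (c *\<^sub>R x) = c * payoff U al x"
  by (simp add: payoff_expand algebra_simps sum_distrib_left)
lemma payoff_zero_right: "payoff U al 0 = 0"
  by (simp add: payoff_expand)

lemma payoff_sum_left: "payoff U (\<Sum>t\<in>T. f t) be = (\<Sum>t\<in>T. payoff U (f t) be)"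
  by (induct T rule: infinite_finite_induct) (simp_all add: payoff_add_left payoff_zero_left)
lemma payoff_sum_right: "payoff U al (\<Sum>t\<in>T. f t) = (\<Sum>t\<in>T. payoff U al (f t))"
  by (induct T rule: infinite_finite_induct) (simp_all add: payoff_add_right payoff_zero_right)

lemma payoff_bound:
  assumes "al \<in> spectraplex" "be \<in> spectraplex"
  shows "\<bar>payoff U al be\<bar> \<le> (\<Sum>k\<in>UNIV. \<Sum>b\<in>UNIV. \<Sum>i\<in>UNIV. \<Sum>j\<in>UNIV. cmod (U $ (k,b) $ (i,j)))"
proof -
  have e: "cmod (U $ (k,b) $ (i,j) * (al $ i $ k * be $ j $ b)) \<le> cmod (U $ (k,b) $ (i,j))" for k b i j
  proof -
    have "cmod (al $ i $ k * be $ j $ b) \<le> 1"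
      using entry_bound[OF assms(1)] entry_bound[OF assms(2)]
      by (simp add: norm_mult mult_le_one)
    then show ?thesis by (simp add: norm_mult mult_left_le)
  qed
  have "\<bar>payoff U al be\<bar> \<le> cmod (\<Sum>k\<in>UNIV. \<Sum>b\<in>UNIV. \<Sum>i\<in>UNIV. \<Sum>j\<in>UNIV.
      U $ (k,b) $ (i,j) * (al $ i $ k * be $ j $ b))"
    unfolding payoff_expand by (rule abs_Re_le_cmod)
  also have "\<dots> \<le> (\<Sum>k\<in>UNIV. \<Sum>b\<in>UNIV. \<Sum>i\<in>UNIV. \<Sum>j\<in>UNIV. cmod (U $ (k,b) $ (i,j)))"
    by (intro order.trans[OF norm_sum] sum_mono e)
  finally show ?thesis .
qed


lemma fst_sum': "fst (sum f A) = (\<Sum>x\<in>A. fst (f x))"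
  by (induct A rule: infinite_finite_induct) simp_all
lemma snd_sum': "snd (sum f A) = (\<Sum>x\<in>A. snd (f x))"
  by (induct A rule: infinite_finite_induct) simp_all

lemma shift_sum: "(\<Sum>t<N. g t) + g N = g 0 + (\<Sum>t<N. g (Suc t))" for g :: "nat \<Rightarrow> real"
  by (induct N) (simp_all add: algebra_simps)

locale ommp_setting =
  fixes U :: "('a::finite \<times> 'b::finite) cmat"
    and hA :: "'a cmat \<Rightarrow> real" and gA :: "'a cmat \<Rightarrow> 'a cmat"
    and hB :: "'b cmat \<Rightarrow> real" and gB :: "'b cmat \<Rightarrow> 'b cmat"
    and nrm :: "('a cmat \<times> 'b cmat) \<Rightarrow> real"
    and \<mu> \<gamma> :: real
  assumes nrm: "is_norm_on nrm herm_pairs"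
    and dA: "diff_with_grad hA gA" and dB: "diff_with_grad hB gB"
    and mu: "\<mu> > 0"
    and sc: "strongly_convex_wrt (reg hA hB) (reg_grad gA gB) nrm \<mu>"
    and ga: "\<gamma> > 0"
    and lip: "\<forall>Z\<in>joint_states. \<forall>Z'\<in>joint_states.
           dual_norm nrm (game_op U Z - game_op U Z') \<le> \<gamma> * nrm (Z - Z')"
begin

definition "\<eta> = \<mu> / (2 * \<gamma>)"
definition "Psi t = fst (ommp U hA gA hB gB \<eta> t)"
definition "Psih t = snd (ommp U hA gA hB gB \<eta> t)"
definition "R = reg hA hB"
definition "G = reg_grad gA gB"
definition "F = game_op U"
definition "D X Y = R X - R Y - inner (X - Y) (G Y)"
definition "I0 = ((1 / real CARD('a)) *\<^sub>R (mat 1 :: 'a cmat), (1 / real CARD('b)) *\<^sub>R (mat 1 :: 'b cmat))"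

lemma eta_pos: "\<eta> > 0" using mu ga by (simp add: \<eta>_def)
lemma eta_ga: "\<eta> * \<gamma> = \<mu> / 2" using ga by (simp add: \<eta>_def)

lemma I0_joint: "I0 \<in> joint_states"
  by (simp add: I0_def joint_states_def init_spectraplex)

lemma Psi0: "Psi 0 = I0" "Psih 0 = I0"
  by (simp_all add: Psi_def Psih_def I0_def)

lemma PsiSuc: "Psi (Suc t) = prox hA gA hB gB \<eta> (Psih t) (F (Psi t))"
  "Psih (Suc t) = prox hA gA hB gB \<eta> (Psih t) (F (Psi (Suc t)))"
  by (simp_all add: Psi_def Psih_def F_def Let_def split_beta)

lemma proxJ:
  assumes "X \<in> joint_states"
  shows "prox hA gA hB gB \<eta> X Y \<in> joint_states \<and> (\<forall>C\<in>joint_states.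
     \<eta> * ip Y (C - prox hA gA hB gB \<eta> X Y) \<le> inner (C - prox hA gA hB gB \<eta> X Y) (G (prox hA gA hB gB \<eta> X Y) - G X))"
  using prox_props[OF dA dB eta_pos assms, of Y] by (simp add: G_def)

lemma joint: "Psi t \<in> joint_states \<and> Psih t \<in> joint_states"
proof (induct t)
  case 0 then show ?case by (simp add: Psi0 I0_joint)
next
  case (Suc t)
  have a: "Psi (Suc t) \<in> joint_states"
    unfolding PsiSuc using conjunct1[OF proxJ[OF conjunct2[OF Suc]]] .
  have b: "Psih (Suc t) \<in> joint_states"
    unfolding PsiSuc(2) using conjunct1[OF proxJ[OF conjunct2[OF Suc]]] .
  show ?case using a b by blast
qed

lemma sc':
  assumes X: "X \<in> joint_states" and Y: "Y \<in> joint_states"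
  shows "\<mu> / 2 * (nrm (X - Y))\<^sup>2 \<le> D X Y"
proof -
  have "R X \<ge> R Y + ip (X - Y) (G Y) + \<mu> / 2 * (nrm (X - Y))\<^sup>2"
    using sc X Y unfolding strongly_convex_wrt_def R_def G_def by blast
  moreover have "ip (X - Y) (G Y) = inner (X - Y) (G Y)"
    unfolding G_def by (rule ip_inner[OF grad_herm[OF dA dB Y]])
  ultimately show ?thesis by (simp add: D_def)
qed

lemma D_nonneg:
  assumes "X \<in> joint_states" "Y \<in> joint_states" shows "0 \<le> D X Y"
proof -
  have "0 \<le> \<mu> / 2 * (nrm (X - Y))\<^sup>2" using mu by simp
  then show ?thesis using sc'[OF assms] by linarith
qed

lemma step:
  assumes Z: "Z \<in> joint_states"
  shows "\<eta> * ip (F (Psi (Suc t))) (Z - Psi (Suc t))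
     \<le> (D Z (Psih t) + \<mu> / 2 * (nrm (Psih t - Psi t))\<^sup>2)
        - (D Z (Psih (Suc t)) + \<mu> / 2 * (nrm (Psih (Suc t) - Psi (Suc t)))\<^sup>2)"
proof -
  define Xh where "Xh = Psih t"
  define X where "X = Psi t"
  define P1 where "P1 = Psi (Suc t)"
  define Q1 where "Q1 = Psih (Suc t)"
  define f0 where "f0 = F X"
  define f1 where "f1 = F P1"
  have J: "Xh \<in> joint_states" "X \<in> joint_states" "P1 \<in> joint_states" "Q1 \<in> joint_states"
    using joint[of t] joint[of "Suc t"] by (auto simp: Xh_def X_def P1_def Q1_def)
  have HP: "Q1 - P1 \<in> herm_pairs" "Z - Q1 \<in> herm_pairs" "P1 - Q1 \<in> herm_pairs" "Z - P1 \<in> herm_pairs"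
    using J Z by (auto intro: joint_diff_herm)
  have P1e: "P1 = prox hA gA hB gB \<eta> Xh f0" by (simp add: P1_def PsiSuc Xh_def f0_def X_def)
  have Q1e: "Q1 = prox hA gA hB gB \<eta> Xh f1" by (simp add: Q1_def PsiSuc Xh_def f1_def P1_def)
  have "\<eta> * ip f0 (Q1 - P1) \<le> inner (Q1 - P1) (G P1 - G Xh)"
    using bspec[OF conjunct2[OF proxJ[OF J(1), of f0]] J(4)] unfolding P1e[symmetric] .
  then have VI1: "\<eta> * inner f0 (Q1 - P1) \<le> inner (Q1 - P1) (G P1 - G Xh)"
    by (simp add: ip_inner[OF HP(1)])
  have "\<eta> * ip f1 (Z - Q1) \<le> inner (Z - Q1) (G Q1 - G Xh)"
    using bspec[OF conjunct2[OF proxJ[OF J(1), of f1]] Z] unfolding Q1e[symmetric] .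
  then have VI2: "\<eta> * inner f1 (Z - Q1) \<le> inner (Z - Q1) (G Q1 - G Xh)"
    by (simp add: ip_inner[OF HP(2)])
  have "\<eta> * ip f1 (P1 - Q1) \<le> inner (P1 - Q1) (G Q1 - G Xh)"
    using bspec[OF conjunct2[OF proxJ[OF J(1), of f1]] J(3)] unfolding Q1e[symmetric] .
  then have VI3: "\<eta> * inner f1 (P1 - Q1) \<le> inner (P1 - Q1) (G Q1 - G Xh)"
    by (simp add: ip_inner[OF HP(3)])
  define E where "E = \<eta> * inner (f1 - f0) (Q1 - P1)"
  define a where "a = nrm (P1 - Xh)"
  define b where "b = nrm (Q1 - P1)"
  define b' where "b' = nrm (Xh - X)"
  define d where "d = nrm (P1 - X)"
  have tp1: "inner (Z - Q1) (G Q1 - G Xh) = D Z Xh - D Z Q1 - D Q1 Xh"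
    by (simp add: D_def inner_diff_left inner_diff_right algebra_simps)
  have tp2: "inner (Q1 - P1) (G P1 - G Xh) = D Q1 Xh - D Q1 P1 - D P1 Xh"
    by (simp add: D_def inner_diff_left inner_diff_right algebra_simps)
  have sym: "D Q1 P1 + D P1 Q1 = inner (Q1 - P1) (G Q1 - G P1)"
    by (simp add: D_def inner_diff_left inner_diff_right algebra_simps)
  have stab: "inner (Q1 - P1) (G Q1 - G P1) \<le> E"
  proof -
    have "\<eta> * inner f0 (Q1 - P1) + \<eta> * inner f1 (P1 - Q1) \<le> inner (Q1 - P1) (G P1 - G Q1)"
      using VI1 VI3 by (simp add: inner_diff_left inner_diff_right algebra_simps)
    then show ?thesis
      by (simp add: E_def inner_diff_left inner_diff_right algebra_simps)
  qed
  have hb: "nrm (P1 - Q1) = b" unfolding b_def using J by (simp add: nrm_commute[OF nrm] joint_herm)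
  have sc1: "\<mu> / 2 * b\<^sup>2 \<le> D Q1 P1" using sc'[OF J(4) J(3)] by (simp add: b_def)
  have sc2: "\<mu> / 2 * b\<^sup>2 \<le> D P1 Q1" using sc'[OF J(3) J(4)] hb by simp
  have sc3: "\<mu> / 2 * a\<^sup>2 \<le> D P1 Xh" using sc'[OF J(3) J(1)] by (simp add: a_def)
  have mub: "\<mu> * b\<^sup>2 \<le> E" using sc1 sc2 sym stab by simp
  have b0: "0 \<le> b" unfolding b_def using HP(1) by (rule nrm_nonneg[OF nrm])
  have d0: "0 \<le> d" unfolding d_def using J by (intro nrm_nonneg[OF nrm] joint_diff_herm)
  have a0: "0 \<le> a" unfolding a_def using J by (intro nrm_nonneg[OF nrm] joint_diff_herm)
  have b'0: "0 \<le> b'" unfolding b'_def using J by (intro nrm_nonneg[OF nrm] joint_diff_herm)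
  have Eub: "E \<le> \<mu> / 2 * d * b"
  proof -
    have "inner (f1 - f0) (Q1 - P1) = ip (f1 - f0) (Q1 - P1)" by (simp add: ip_inner HP(1))
    also have "\<dots> \<le> dual_norm nrm (f1 - f0) * b"
      unfolding b_def by (rule dual_bound[OF nrm HP(1)])
    also have "\<dots> \<le> (\<gamma> * d) * b"
      using lip J(3) J(2) b0 by (intro mult_right_mono) (auto simp: f1_def f0_def F_def d_def)
    finally have "E \<le> \<eta> * (\<gamma> * d * b)" unfolding E_def using eta_pos by (simp add: mult_left_mono)
    moreover have "\<eta> * (\<gamma> * d * b) = \<mu> / 2 * d * b" using eta_ga by (metis mult.assoc)
    ultimately show ?thesis by simp
  qed
  have bd: "b \<le> d / 2"
  proof (cases "b = 0")
    case True then show ?thesis using d0 by simp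
  next
    case False
    then have bp: "b > 0" using b0 by simp
    have "\<mu> * b\<^sup>2 \<le> \<mu> / 2 * d * b" using mub Eub by linarith
    then have "(\<mu> * b) * b \<le> (\<mu> / 2 * d) * b" by (simp add: power2_eq_square mult.assoc)
    then have "\<mu> * b \<le> \<mu> / 2 * d" using bp by (rule mult_right_le_imp_le)
    then show ?thesis using mu by (simp add: field_simps)
  qed
  have E2: "E \<le> \<mu> / 4 * d\<^sup>2"
  proof -
    have "E \<le> \<mu> / 2 * d * b" by (rule Eub)
    also have "\<mu> / 2 * d * b \<le> \<mu> / 2 * d * (d / 2)" using bd mu d0 by (intro mult_left_mono) auto
    also have "\<mu> / 2 * d * (d / 2) = \<mu> / 4 * d\<^sup>2" by (simp add: power2_eq_square)
    finally show ?thesis .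
  qed
  have dtri: "d \<le> a + b'"
  proof -
    have "P1 - X = (P1 - Xh) + (Xh - X)" by simp
    then show ?thesis unfolding d_def a_def b'_def using J
      by (metis nrm_tri[OF nrm] joint_diff_herm)
  qed
  have d2: "d\<^sup>2 \<le> 2 * a\<^sup>2 + 2 * b'\<^sup>2"
  proof -
    have "d\<^sup>2 \<le> (a + b')\<^sup>2" using dtri d0 by (intro power_mono) auto
    also have "\<dots> \<le> 2 * a\<^sup>2 + 2 * b'\<^sup>2" by (smt (verit) sum_squares_bound power2_sum)
    finally show ?thesis .
  qed
  have main: "\<eta> * inner f1 (Z - P1) = (\<eta> * inner f1 (Z - Q1) + \<eta> * inner f0 (Q1 - P1)) + E"
    by (simp add: E_def inner_diff_left inner_diff_right algebra_simps)
  have "\<eta> * inner f1 (Z - P1) \<le> D Z Xh - D Z Q1 - D Q1 P1 - D P1 Xh + E"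
    using main VI1 VI2 tp1 tp2 by simp
  also have "\<dots> \<le> D Z Xh - D Z Q1 - \<mu> / 2 * b\<^sup>2 - \<mu> / 2 * a\<^sup>2 + \<mu> / 4 * (2 * a\<^sup>2 + 2 * b'\<^sup>2)"
  proof -
    have "\<mu> / 4 * d\<^sup>2 \<le> \<mu> / 4 * (2 * a\<^sup>2 + 2 * b'\<^sup>2)" using d2 mu by (intro mult_left_mono) auto
    then show ?thesis using sc1 sc3 E2 by linarith
  qed
  also have "\<dots> = (D Z Xh + \<mu> / 2 * b'\<^sup>2) - (D Z Q1 + \<mu> / 2 * b\<^sup>2)"
    by (simp add: algebra_simps)
  finally show ?thesis
    using HP(4) by (simp add: ip_inner f1_def b_def b'_def Xh_def X_def Q1_def P1_def)
qed

end


context ommp_setting begin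

lemma sum_bound:
  assumes Z: "Z \<in> joint_states"
  shows "\<eta> * (\<Sum>t<N. ip (F (Psi (Suc t))) (Z - Psi (Suc t))) \<le> D Z I0"
proof -
  define \<Phi> where "\<Phi> t = D Z (Psih t) + \<mu> / 2 * (nrm (Psih t - Psi t))\<^sup>2" for t
  have "\<eta> * (\<Sum>t<N. ip (F (Psi (Suc t))) (Z - Psi (Suc t))) = (\<Sum>t<N. \<eta> * ip (F (Psi (Suc t))) (Z - Psi (Suc t)))"
    by (simp add: sum_distrib_left)
  also have "\<dots> \<le> (\<Sum>t<N. \<Phi> t - \<Phi> (Suc t))"
    by (intro sum_mono) (use step[OF Z] in \<open>simp add: \<Phi>_def\<close>)
  also have "\<dots> = \<Phi> 0 - \<Phi> N" by (rule sum_lessThan_telescope')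
  also have "\<dots> \<le> \<Phi> 0"
  proof -
    have "0 \<le> D Z (Psih N)" using D_nonneg Z joint by blast
    moreover have "0 \<le> \<mu> / 2 * (nrm (Psih N - Psi N))\<^sup>2" using mu by simp
    ultimately show ?thesis by (simp add: \<Phi>_def)
  qed
  also have "\<Phi> 0 = D Z I0" by (simp add: \<Phi>_def Psi0 nrm_0[OF nrm])
  finally show ?thesis .
qed

lemma K0_exists: "\<exists>K0\<ge>0. \<forall>Z\<in>joint_states. D Z I0 \<le> K0"
proof -
  have "bounded (hA ` spectraplex)"
    by (intro compact_imp_bounded compact_continuous_image diff_with_grad_cont[OF dA] compact_spectraplex)
  then obtain MA where MA: "\<forall>x\<in>spectraplex. norm (hA x) \<le> MA" unfolding bounded_iff by auto
  have "bounded (hB ` spectraplex)"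
    by (intro compact_imp_bounded compact_continuous_image diff_with_grad_cont[OF dB] compact_spectraplex)
  then obtain MB where MB: "\<forall>x\<in>spectraplex. norm (hB x) \<le> MB" unfolding bounded_iff by auto
  have "bounded (joint_states :: ('a cmat \<times> 'b cmat) set)"
    unfolding joint_states_def by (intro bounded_Times bounded_spectraplex)
  then obtain BJ where BJ: "\<forall>Z\<in>(joint_states :: ('a cmat \<times> 'b cmat) set). norm Z \<le> BJ" unfolding bounded_iff by auto
  define K where "K = MA + MB - R I0 + (BJ + norm I0) * norm (G I0)"
  have "D Z I0 \<le> K" if Z: "Z \<in> joint_states" for Z
  proof -
    have "R Z \<le> MA + MB"
      using MA MB Z by (force simp: R_def reg_def joint_states_def)
    moreover have "- inner (Z - I0) (G I0) \<le> (BJ + norm I0) * norm (G I0)"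
    proof -
      have "- inner (Z - I0) (G I0) \<le> norm (Z - I0) * norm (G I0)"
        using norm_cauchy_schwarz[of "I0 - Z" "G I0"] by (simp add: inner_diff_left norm_minus_commute)
      also have "\<dots> \<le> (BJ + norm I0) * norm (G I0)"
      proof (rule mult_right_mono)
        show "norm (Z - I0) \<le> BJ + norm I0"
          using norm_triangle_ineq4[of Z I0] BJ Z by force
      qed simp
      finally show ?thesis .
    qed
    ultimately show ?thesis by (simp add: D_def K_def)
  qed
  then show ?thesis by (intro exI[of _ "max K 0"]) force
qed

definition "Bp = (\<Sum>k\<in>UNIV. \<Sum>b\<in>UNIV. \<Sum>i\<in>UNIV. \<Sum>j\<in>UNIV. cmod (U $ (k,b) $ (i,j)))"

lemma Bp_nonneg: "0 \<le> Bp" by (simp add: Bp_def sum_nonneg)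

lemma g_bound:
  assumes "Z \<in> joint_states" "P \<in> joint_states"
  shows "\<bar>ip (F P) (Z - P)\<bar> \<le> 2 * Bp"
proof -
  have "\<bar>payoff U (fst Z) (snd P)\<bar> \<le> Bp" "\<bar>payoff U (fst P) (snd Z)\<bar> \<le> Bp"
    using assms by (auto simp: Bp_def joint_states_def intro!: payoff_bound)
  then show ?thesis using game_gap[OF assms] by (simp add: F_def)
qed

lemma gsum:
  assumes Z: "Z \<in> joint_states" and K0: "\<forall>Z\<in>joint_states. D Z I0 \<le> K0"
  shows "(\<Sum>t<N. ip (F (Psi t)) (Z - Psi t)) \<le> K0 / \<eta> + 4 * Bp"
proof -
  define g where "g t = ip (F (Psi t)) (Z - Psi t)" for t
  have gb: "\<bar>g t\<bar> \<le> 2 * Bp" for t using g_bound[OF Z] joint by (simp add: g_def)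
  have "D Z I0 \<le> K0" using K0 Z by blast
  then have "\<eta> * (\<Sum>t<N. g (Suc t)) \<le> K0" using sum_bound[OF Z, of N] by (simp add: g_def)
  then have s1: "(\<Sum>t<N. g (Suc t)) \<le> K0 / \<eta>" using eta_pos by (simp add: field_simps)
  have "(\<Sum>t<N. g t) = g 0 + (\<Sum>t<N. g (Suc t)) - g N" using shift_sum[of g N] by simp
  also have "\<dots> \<le> 2 * Bp + K0 / \<eta> + 2 * Bp" using gb[of 0] gb[of N] s1 by linarith
  finally show ?thesis by (simp add: g_def)
qed

lemma avg_eq: "ommp_avg U hA gA hB gB \<eta> N = (1 / real N) *\<^sub>R (\<Sum>t<N. Psi t)"
  by (simp add: ommp_avg_def Psi_def)

lemma avg_joint:
  assumes N: "N > 0"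
  shows "ommp_avg U hA gA hB gB \<eta> N \<in> joint_states"
proof -
  have s: "(\<Sum>t<N. 1 / real N) = 1" using N by simp
  have "(\<Sum>t<N. (1 / real N) *\<^sub>R fst (Psi t)) \<in> spectraplex"
    by (rule convex_sum[OF _ convex_spectraplex s]) (use joint in \<open>auto simp: joint_states_def mem_Times_iff\<close>)
  moreover have "(\<Sum>t<N. (1 / real N) *\<^sub>R snd (Psi t)) \<in> spectraplex"
    by (rule convex_sum[OF _ convex_spectraplex s]) (use joint in \<open>auto simp: joint_states_def mem_Times_iff\<close>)
  ultimately show ?thesis
    by (simp add: avg_eq joint_states_def mem_Times_iff fst_sum' snd_sum' scaleR_sum_right)
qed

lemma avg_payoff:
  assumes Z: "Z \<in> joint_states"
  shows "payoff U (fst Z) (snd (ommp_avg U hA gA hB gB \<eta> N)) - payoff U (fst (ommp_avg U hA gA hB gB \<eta> N)) (snd Z)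
     = (1 / real N) * (\<Sum>t<N. ip (F (Psi t)) (Z - Psi t))"
proof -
  have "ip (F (Psi t)) (Z - Psi t) = payoff U (fst Z) (snd (Psi t)) - payoff U (fst (Psi t)) (snd Z)" for t
    using game_gap[OF Z] joint by (simp add: F_def)
  then show ?thesis
    by (simp add: avg_eq fst_sum' snd_sum' payoff_scale_left payoff_scale_right payoff_sum_left
        payoff_sum_right sum_subtractf right_diff_distrib)
qed

theorem rate: "\<exists>C>0. \<forall>\<epsilon>>0. \<forall>N::nat. real N \<ge> C / \<epsilon> \<longrightarrow>
           is_eps_nash U \<epsilon> (ommp_avg U hA gA hB gB \<eta> N)"
proof -
  obtain K0 where K0: "K0 \<ge> 0" "\<forall>Z\<in>joint_states. D Z I0 \<le> K0" using K0_exists by blast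
  define C where "C = K0 / \<eta> + 4 * Bp + 1"
  have "0 \<le> K0 / \<eta>" using K0 eta_pos by simp
  then have Cpos: "C > 0" using Bp_nonneg by (simp add: C_def)
  have "is_eps_nash U \<epsilon> (ommp_avg U hA gA hB gB \<eta> N)" if e: "\<epsilon> > 0" and NC: "real N \<ge> C / \<epsilon>" for \<epsilon> N
  proof -
    define Zb where "Zb = ommp_avg U hA gA hB gB \<eta> N"
    have "C / \<epsilon> > 0" using Cpos e by simp
    then have Npos: "N > 0" using NC by linarith
    have ZbJ: "Zb \<in> joint_states" using avg_joint[OF Npos] by (simp add: Zb_def)
    have CN: "C \<le> \<epsilon> * real N" using NC e by (simp add: field_simps)
    have key: "payoff U al (snd Zb) \<le> payoff U (fst Zb) be + \<epsilon>"
      if al: "al \<in> spectraplex" and be: "be \<in> spectraplex" for al be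
    proof -
      have ZJ: "(al, be) \<in> joint_states" using al be by (simp add: joint_states_def)
      have "payoff U al (snd Zb) - payoff U (fst Zb) be = (1 / real N) * (\<Sum>t<N. ip (F (Psi t)) ((al, be) - Psi t))"
        using avg_payoff[OF ZJ, of N] by (simp add: Zb_def)
      also have "\<dots> \<le> (1 / real N) * C"
      proof (rule mult_left_mono)
        show "(\<Sum>t<N. ip (F (Psi t)) ((al, be) - Psi t)) \<le> C"
          using gsum[OF ZJ K0(2), of N] by (simp add: C_def)
      qed simp
      also have "\<dots> \<le> \<epsilon>" using CN Npos by (simp add: field_simps)
      finally show ?thesis by simp
    qed
    have "(SUP al\<in>spectraplex. payoff U al (snd Zb)) \<le> (INF be\<in>spectraplex. payoff U (fst Zb) be) + \<epsilon>"
    proof (rule cSUP_least[OF spectraplex_nonempty])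
      fix al :: "'a cmat" assume al: "al \<in> spectraplex"
      have "payoff U al (snd Zb) - \<epsilon> \<le> (INF be\<in>spectraplex. payoff U (fst Zb) be)"
        by (rule cINF_greatest[OF spectraplex_nonempty]) (use key al in force)
      then show "payoff U al (snd Zb) \<le> (INF be\<in>spectraplex. payoff U (fst Zb) be) + \<epsilon>" by simp
    qed
    then have "duality_gap U Zb \<le> \<epsilon>" by (simp add: duality_gap_def)
    then show ?thesis using ZbJ by (simp add: is_eps_nash_def Zb_def)
  qed
  then show ?thesis using Cpos by blast
qed

end


theorem mainTheorem1:
  fixes P :: "'w::finite \<Rightarrow> ('a::finite \<times> 'b::finite) cmat"
    and u :: "'w \<Rightarrow> real"
    and n m :: nat
    and hA :: "'a cmat \<Rightarrow> real" and gA :: "'a cmat \<Rightarrow> 'a cmat"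
    and hB :: "'b cmat \<Rightarrow> real" and gB :: "'b cmat \<Rightarrow> 'b cmat"
    and nrm :: "('a cmat \<times> 'b cmat) \<Rightarrow> real"
    and \<mu> \<gamma> :: real
  assumes "CARD('a) = 2 ^ n" and "CARD('b) = 2 ^ m"
    and "is_povm P"
    and "\<forall>w. \<bar>u w\<bar> \<le> 1"
    and "is_norm_on nrm herm_pairs"
    and "diff_with_grad hA gA" and "diff_with_grad hB gB"
    and "\<mu> > 0"
    and "strongly_convex_wrt (reg hA hB) (reg_grad gA gB) nrm \<mu>"
    and "\<gamma> > 0"
    and "\<forall>Z\<in>joint_states. \<forall>Z'\<in>joint_states.
           dual_norm nrm (game_op (payoff_obs P u) Z - game_op (payoff_obs P u) Z')
             \<le> \<gamma> * nrm (Z - Z')"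
  shows "\<exists>C>0. \<forall>\<epsilon>>0. \<forall>N::nat. real N \<ge> C / \<epsilon> \<longrightarrow>
           is_eps_nash (payoff_obs P u) \<epsilon>
             (ommp_avg (payoff_obs P u) hA gA hB gB (\<mu> / (2 * \<gamma>)) N)"
  proof -
  interpret ommp_setting "payoff_obs P u" hA gA hB gB nrm \<mu> \<gamma>
    by (unfold_locales; fact assms)
  show ?thesis using rate[unfolded \<eta>_def] .
qed

end
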